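(* Let $d\ge 2$, let $\pi$ be a permutation of $\{0,1,\dots,d-1\}$ with $\pi(0)=0$, and let $a^{(0)},\dots,a^{(d-1)}$ be positive semidefinite complex $d\times d$ matrices with $\mathrm{Tr}\big(a^{(0)}+\dots+a^{(d-1)}\big)=1$. Let $$\rho_\pi=\sum_{\alpha=0}^{d-1}\sum_{i,j=0}^{d-1} a^{(\alpha)}_{ij}\, e_{ij}\otimes e_{\pi(i)+\alpha,\ \pi(j)+\alpha},$$ which is a state on $\mathbb{C}^d\otimes\mathbb{C}^d$, and define $d\times d$ matrices $\widetilde a^{(\gamma)}$, $\gamma=0,\dots,d-1$, by $\widetilde a^{(\gamma)}_{ij}=a^{(\gamma-\pi(i)-\pi(j))}_{ij}$ (superscript mod $d$). Then $\rho_\pi$ is PPT if and only if $\widetilde a^{(\gamma)}\ge 0$ for every $\gamma=0,\dots,d-1$.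
   Context: $\{e_0,\dots,e_{d-1}\}$ is the computational basis of $\mathbb{C}^d$, $e_{ij}=|e_i\rangle\langle e_j|$, and all indices of basis vectors are taken mod $d$. For an operator $\rho$ on $\mathbb{C}^d\otimes\mathbb{C}^d$, $\rho^\tau=(\mathrm{id}\otimes\tau)\rho$ denotes the partial transposition with respect to the second factor, where $\tau$ is transposition in the computational basis, i.e. $(\mathrm{id}\otimes\tau)(A\otimes B)=A\otimes B^{T}$. A state $\rho$ is called PPT if $\rho^\tau\ge 0$. *)

theory Defs
  imports "HOL-Analysis.Analysis" "HOL-Combinatorics.Permutations"
begin

text \<open>Matrices are functions from (row, column) indices to complex numbers;
  a d x d matrix uses indices in {..<d}, an operator on C^d (x) C^d uses
  pairs of indices in {..<d} x {..<d}: row (i,k), column (j,l).\<close>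

definition psd_on :: "'i set \<Rightarrow> ('i \<Rightarrow> 'i \<Rightarrow> complex) \<Rightarrow> bool" where
  "psd_on I A \<longleftrightarrow>
     (\<forall>p\<in>I. \<forall>q\<in>I. A q p = cnj (A p q)) \<and>
     (\<forall>x :: 'i \<Rightarrow> complex.
        (\<Sum>p\<in>I. \<Sum>q\<in>I. cnj (x p) * A p q * x q) \<in> \<real> \<and>
        0 \<le> Re (\<Sum>p\<in>I. \<Sum>q\<in>I. cnj (x p) * A p q * x q))"

definition eunit :: "nat \<Rightarrow> nat \<Rightarrow> nat \<Rightarrow> nat \<Rightarrow> nat \<Rightarrow> complex" where
  "eunit d i j = (\<lambda>r s. if r = i mod d \<and> s = j mod d then 1 else 0)"

definition tensor :: "(nat \<Rightarrow> nat \<Rightarrow> complex) \<Rightarrow> (nat \<Rightarrow> nat \<Rightarrow> complex)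
    \<Rightarrow> (nat \<times> nat) \<Rightarrow> (nat \<times> nat) \<Rightarrow> complex" where
  "tensor A B = (\<lambda>(r, k) (s, l). A r s * B k l)"

definition ptrans :: "((nat \<times> nat) \<Rightarrow> (nat \<times> nat) \<Rightarrow> complex)
    \<Rightarrow> (nat \<times> nat) \<Rightarrow> (nat \<times> nat) \<Rightarrow> complex" where
  "ptrans \<rho> = (\<lambda>(r, k) (s, l). \<rho> (r, l) (s, k))"

definition rho_pi :: "nat \<Rightarrow> (nat \<Rightarrow> nat) \<Rightarrow> (nat \<Rightarrow> nat \<Rightarrow> nat \<Rightarrow> complex)
    \<Rightarrow> (nat \<times> nat) \<Rightarrow> (nat \<times> nat) \<Rightarrow> complex" where
  "rho_pi d \<pi> a = (\<lambda>p q. \<Sum>\<alpha><d. \<Sum>i<d. \<Sum>j<d.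
      a \<alpha> i j * tensor (eunit d i j) (eunit d (\<pi> i + \<alpha>) (\<pi> j + \<alpha>)) p q)"

definition atilde :: "nat \<Rightarrow> (nat \<Rightarrow> nat) \<Rightarrow> (nat \<Rightarrow> nat \<Rightarrow> nat \<Rightarrow> complex)
    \<Rightarrow> nat \<Rightarrow> nat \<Rightarrow> nat \<Rightarrow> complex" where
  "atilde d \<pi> a \<gamma> = (\<lambda>i j.
      a (nat ((int \<gamma> - int (\<pi> i) - int (\<pi> j)) mod int d)) i j)"

end

theory Submission imports Defs begin
lemma modlem:
  fixes d l m \<alpha> :: nat
  assumes "0 < d" "\<alpha> < d" "l < d"
  shows "(l = (m + \<alpha>) mod d) \<longleftrightarrow> (int \<alpha> = (int l - int m) mod int d)"
proof
  assume h: "l = (m + \<alpha>) mod d"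
  have 1: "int l = (int m + int \<alpha>) mod int d" using h by (simp add: of_nat_mod)
  have "(int l - int m) mod int d = ((int m + int \<alpha>) mod int d - int m) mod int d" by (simp only: 1)
  also have "\<dots> = (int m + int \<alpha> - int m) mod int d" by (rule mod_diff_left_eq)
  also have "\<dots> = int \<alpha>" using assms by simp
  finally show "int \<alpha> = (int l - int m) mod int d" by simp
next
  assume h: "int \<alpha> = (int l - int m) mod int d"
  have "int ((m + \<alpha>) mod d) = (int m + int \<alpha>) mod int d" by (simp add: of_nat_mod)
  also have "\<dots> = (int m + (int l - int m) mod int d) mod int d" by (simp only: h)
  also have "\<dots> = (int m + (int l - int m)) mod int d" by (rule mod_add_right_eq)
  also have "\<dots> = int l" using assms by simp
  finally show "l = (m + \<alpha>) mod d" by simp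
qed

lemma modlem2:
  fixes d \<alpha> l m :: nat
  assumes "0 < d" "\<alpha> < d" "l < d"
  shows "(l = (m + \<alpha>) mod d) \<longleftrightarrow> \<alpha> = nat ((int l - int m) mod int d)"
proof -
  have X: "0 \<le> (int l - int m) mod int d" using assms by simp
  have M: "(l = (m + \<alpha>) mod d) \<longleftrightarrow> (int \<alpha> = (int l - int m) mod int d)" by (rule modlem[OF assms])
  have N: "(int \<alpha> = (int l - int m) mod int d) \<longleftrightarrow> \<alpha> = nat ((int l - int m) mod int d)"
  proof
    assume "int \<alpha> = (int l - int m) mod int d"
    hence "nat (int \<alpha>) = nat ((int l - int m) mod int d)" by (rule arg_cong)
    thus "\<alpha> = nat ((int l - int m) mod int d)" by (simp only: nat_int)
  next
    assume "\<alpha> = nat ((int l - int m) mod int d)"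
    hence "int \<alpha> = int (nat ((int l - int m) mod int d))" by (rule arg_cong)
    also have "\<dots> = (int l - int m) mod int d" using X by (rule nat_0_le)
    finally show "int \<alpha> = (int l - int m) mod int d" .
  qed
  show ?thesis by (rule trans[OF M N])
qed

lemma intcong:
  fixes x y z w d :: int
  shows "((x - y) mod d = (z - w) mod d) \<longleftrightarrow> ((z + y) mod d = (x + w) mod d)"
proof -
  have e: "(x - y) - (z - w) = - ((z + y) - (x + w))" by simp
  have "((x - y) mod d = (z - w) mod d) \<longleftrightarrow> d dvd (x - y) - (z - w)" by (rule mod_eq_dvd_iff)
  also have "\<dots> \<longleftrightarrow> d dvd (z + y) - (x + w)" unfolding e by (rule dvd_minus_iff)
  also have "\<dots> \<longleftrightarrow> ((z + y) mod d = (x + w) mod d)" by (rule mod_eq_dvd_iff[symmetric])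
  finally show ?thesis .
qed

lemma T_eq:
  assumes d: "0 < d" and rs: "r < d" "s < d" "k < d" "l < d"
  shows "ptrans (rho_pi d \<pi> a) (r,k) (s,l) =
    (if (k + \<pi> r) mod d = (l + \<pi> s) mod d then atilde d \<pi> a ((k + \<pi> r) mod d) r s else 0)"
proof -
  have step1: "(\<Sum>i<d. \<Sum>j<d. a \<alpha> i j * tensor (eunit d i j) (eunit d (\<pi> i + \<alpha>) (\<pi> j + \<alpha>)) (r,l) (s,k))
     = a \<alpha> r s * (if l = (\<pi> r + \<alpha>) mod d \<and> k = (\<pi> s + \<alpha>) mod d then 1 else 0)" for \<alpha>
  proof -
    have "(\<Sum>i<d. \<Sum>j<d. a \<alpha> i j * tensor (eunit d i j) (eunit d (\<pi> i + \<alpha>) (\<pi> j + \<alpha>)) (r,l) (s,k))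
       = (\<Sum>i<d. \<Sum>j<d. if i = r then (if j = s then a \<alpha> r s * (if l = (\<pi> r + \<alpha>) mod d \<and> k = (\<pi> s + \<alpha>) mod d then 1 else 0) else 0) else 0)"
      apply (rule sum.cong[OF refl])+
      using rs by (auto simp: tensor_def eunit_def)
    also have "\<dots> = (\<Sum>i<d. if i = r then (\<Sum>j<d. if j = s then a \<alpha> r s * (if l = (\<pi> r + \<alpha>) mod d \<and> k = (\<pi> s + \<alpha>) mod d then 1 else 0) else 0) else 0)"
      by (rule sum.cong[OF refl]) simp
    also have "\<dots> = a \<alpha> r s * (if l = (\<pi> r + \<alpha>) mod d \<and> k = (\<pi> s + \<alpha>) mod d then 1 else 0)"
      using rs by (simp add: sum.delta)
    finally show ?thesis .
  qed
  define \<alpha>0 where "\<alpha>0 = nat ((int l - int (\<pi> r)) mod int d)"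
  have a0: "\<alpha>0 < d" unfolding \<alpha>0_def using d
  proof -
    have "(int l - int (\<pi> r)) mod int d < int d" using d by simp
    moreover have "0 \<le> (int l - int (\<pi> r)) mod int d" using d by simp
    ultimately show "nat ((int l - int (\<pi> r)) mod int d) < d" by linarith
  qed
  have "ptrans (rho_pi d \<pi> a) (r,k) (s,l) =
     (\<Sum>\<alpha><d. a \<alpha> r s * (if l = (\<pi> r + \<alpha>) mod d \<and> k = (\<pi> s + \<alpha>) mod d then 1 else 0))"
    unfolding ptrans_def rho_pi_def by (simp add: step1)
  also have "\<dots> = (\<Sum>\<alpha><d. if \<alpha> = \<alpha>0 then a \<alpha>0 r s * (if k = (\<pi> s + \<alpha>0) mod d then 1 else 0) else 0)"
  proof (intro sum.cong refl)
    fix \<alpha> assume "\<alpha> \<in> {..<d}"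
    hence "\<alpha> < d" by simp
    thus "a \<alpha> r s * (if l = (\<pi> r + \<alpha>) mod d \<and> k = (\<pi> s + \<alpha>) mod d then 1 else 0) =
      (if \<alpha> = \<alpha>0 then a \<alpha>0 r s * (if k = (\<pi> s + \<alpha>0) mod d then 1 else 0) else 0)"
      using modlem2[OF d _ rs(4), of \<alpha> "\<pi> r"] unfolding \<alpha>0_def by auto
  qed
  also have "\<dots> = a \<alpha>0 r s * (if k = (\<pi> s + \<alpha>0) mod d then 1 else 0)"
    using a0 by simp
  also have "\<dots> = (if (k + \<pi> r) mod d = (l + \<pi> s) mod d then atilde d \<pi> a ((k + \<pi> r) mod d) r s else 0)"
  proof -
    have i0: "int \<alpha>0 = (int l - int (\<pi> r)) mod int d" unfolding \<alpha>0_def using d by simp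
    have c: "(k = (\<pi> s + \<alpha>0) mod d) \<longleftrightarrow> (k + \<pi> r) mod d = (l + \<pi> s) mod d"
    proof -
      have "(k = (\<pi> s + \<alpha>0) mod d) \<longleftrightarrow> (int l - int (\<pi> r)) mod int d = (int k - int (\<pi> s)) mod int d"
        using modlem[OF d a0 rs(3), of "\<pi> s"] i0 by simp
      also have "\<dots> \<longleftrightarrow> (int k + int (\<pi> r)) mod int d = (int l + int (\<pi> s)) mod int d"
        by (rule intcong)
      also have "\<dots> \<longleftrightarrow> (k + \<pi> r) mod d = (l + \<pi> s) mod d"
        by (simp only: of_nat_add[symmetric] of_nat_mod[symmetric] of_nat_eq_iff)
      finally show ?thesis .
    qed
    have idx: "nat ((int ((k + \<pi> r) mod d) - int (\<pi> r) - int (\<pi> s)) mod int d) = \<alpha>0"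
      if h: "(k + \<pi> r) mod d = (l + \<pi> s) mod d"
    proof -
      have "(int ((k + \<pi> r) mod d) - int (\<pi> r) - int (\<pi> s)) mod int d
          = ((int k + int (\<pi> r)) mod int d - int (\<pi> r) - int (\<pi> s)) mod int d"
        by (simp add: of_nat_mod)
      also have "\<dots> = ((int k + int (\<pi> r)) mod int d - (int (\<pi> r) + int (\<pi> s))) mod int d"
        by (simp only: diff_diff_eq)
      also have "\<dots> = (int k + int (\<pi> r) - (int (\<pi> r) + int (\<pi> s))) mod int d"
        by (rule mod_diff_left_eq)
      also have "\<dots> = (int k - int (\<pi> s)) mod int d" by simp
      also have "\<dots> = (int l - int (\<pi> r)) mod int d"
      proof -
        have "int ((k + \<pi> r) mod d) = int ((l + \<pi> s) mod d)" using h by simp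
        hence hi: "(int k + int (\<pi> r)) mod int d = (int l + int (\<pi> s)) mod int d"
          by (simp only: of_nat_mod of_nat_add)
        show ?thesis using intcong[of "int l" "int (\<pi> r)" "int d" "int k" "int (\<pi> s)"] hi by simp
      qed
      finally show ?thesis unfolding \<alpha>0_def by simp
    qed
    show ?thesis using c idx unfolding atilde_def by auto
  qed
  finally show ?thesis .
qed
definition kk :: "nat \<Rightarrow> (nat \<Rightarrow> nat) \<Rightarrow> nat \<Rightarrow> nat \<Rightarrow> nat" where
  "kk d \<pi> g r = nat ((int g - int (\<pi> r)) mod int d)"

lemma kk_lt: assumes d: "0 < d" shows "kk d \<pi> g r < d"
proof -
  have "(int g - int (\<pi> r)) mod int d < int d" using d by simp
  moreover have "0 \<le> (int g - int (\<pi> r)) mod int d" using d by simp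
  ultimately show ?thesis unfolding kk_def by linarith
qed

lemma kk_iff: assumes d: "0 < d" "k < d" "g < d"
  shows "((k + \<pi> r) mod d = g) \<longleftrightarrow> k = kk d \<pi> g r"
  using modlem2[OF d(1) d(2) d(3), of "\<pi> r"] unfolding kk_def by (auto simp: add.commute)

lemma kk_mod: assumes d: "0 < d" "g < d" shows "(kk d \<pi> g r + \<pi> r) mod d = g"
  using kk_iff[where \<pi>=\<pi> and r=r, OF d(1) kk_lt[OF d(1)] d(2)] by simp

lemma T_diag: assumes d: "0 < d" "r < d" "s < d" "g < d"
  shows "ptrans (rho_pi d \<pi> a) (r, kk d \<pi> g r) (s, kk d \<pi> g s) = atilde d \<pi> a g r s"
  using T_eq[where \<pi>=\<pi> and a=a, OF d(1) d(2) d(3) kk_lt[OF d(1)] kk_lt[OF d(1)]] kk_mod[OF d(1) d(4)]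
  by simp

lemma prodsum: "(\<Sum>p\<in>A\<times>B. f p) = (\<Sum>x\<in>A. \<Sum>y\<in>B. f (x,y))"
  by (simp add: sum.cartesian_product)

lemma Qform:
  assumes d: "0 < d"
  shows "(\<Sum>p\<in>{..<d}\<times>{..<d}. \<Sum>q\<in>{..<d}\<times>{..<d}. cnj (x p) * ptrans (rho_pi d \<pi> a) p q * x q)
   = (\<Sum>g<d. \<Sum>r<d. \<Sum>s<d. cnj (x (r, kk d \<pi> g r)) * atilde d \<pi> a g r s * x (s, kk d \<pi> g s))"
proof -
  define G where "G r g = (\<Sum>s<d. cnj (x (r, kk d \<pi> g r)) * atilde d \<pi> a g r s * x (s, kk d \<pi> g s))" for r g
  have inner: "(\<Sum>q\<in>{..<d}\<times>{..<d}. cnj (x (r,k)) * ptrans (rho_pi d \<pi> a) (r,k) q * x q)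
      = G r ((k + \<pi> r) mod d)" if rk: "r < d" "k < d" for r k
  proof -
    define g where "g = (k + \<pi> r) mod d"
    have g: "g < d" unfolding g_def using d by simp
    have kg: "k = kk d \<pi> g r" using kk_iff[where \<pi>=\<pi> and r=r, OF d rk(2) g] g_def by simp
    have "(\<Sum>q\<in>{..<d}\<times>{..<d}. cnj (x (r,k)) * ptrans (rho_pi d \<pi> a) (r,k) q * x q)
       = (\<Sum>s<d. \<Sum>l<d. cnj (x (r,k)) * ptrans (rho_pi d \<pi> a) (r,k) (s,l) * x (s,l))"
      by (rule prodsum)
    also have "\<dots> = (\<Sum>s<d. \<Sum>l<d. if l = kk d \<pi> g s then cnj (x (r,k)) * atilde d \<pi> a g r s * x (s,l) else 0)"
    proof (rule sum.cong[OF refl], rule sum.cong[OF refl])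
      fix s l assume "s \<in> {..<d}" "l \<in> {..<d}"
      hence sl: "s < d" "l < d" by auto
      have "((l + \<pi> s) mod d = g) \<longleftrightarrow> l = kk d \<pi> g s" by (rule kk_iff[where \<pi>=\<pi> and r=s, OF d sl(2) g])
      thus "cnj (x (r,k)) * ptrans (rho_pi d \<pi> a) (r,k) (s,l) * x (s,l) =
         (if l = kk d \<pi> g s then cnj (x (r,k)) * atilde d \<pi> a g r s * x (s,l) else 0)"
        using T_eq[where \<pi>=\<pi> and a=a, OF d rk(1) sl(1) rk(2) sl(2)] unfolding g_def[symmetric]
        by (auto simp: eq_commute[of g])
    qed
    also have "\<dots> = (\<Sum>s<d. cnj (x (r,k)) * atilde d \<pi> a g r s * x (s, kk d \<pi> g s))"
      using kk_lt[OF d] by (simp add: sum.delta')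
    also have "\<dots> = G r g" unfolding G_def kg[symmetric] ..
    finally show ?thesis unfolding g_def .
  qed
  have reidx: "(\<Sum>k<d. G r ((k + \<pi> r) mod d)) = (\<Sum>g<d. G r g)" for r
  proof (rule sum.reindex_bij_witness[where i="\<lambda>g. kk d \<pi> g r" and j="\<lambda>k. (k + \<pi> r) mod d"])
    fix k assume "k \<in> {..<d}"
    hence k: "k < d" by simp
    have g: "(k + \<pi> r) mod d < d" using d by simp
    show "kk d \<pi> ((k + \<pi> r) mod d) r = k" using kk_iff[where \<pi>=\<pi> and r=r, OF d k g] by simp
    show "(k + \<pi> r) mod d \<in> {..<d}" using g by simp
    show "G r ((k + \<pi> r) mod d) = G r ((k + \<pi> r) mod d)" ..
  next
    fix g assume "g \<in> {..<d}"
    hence g: "g < d" by simp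
    show "(kk d \<pi> g r + \<pi> r) mod d = g" by (rule kk_mod[where \<pi>=\<pi> and r=r, OF d g])
    show "kk d \<pi> g r \<in> {..<d}" using kk_lt[OF d] by simp
  qed
  have "(\<Sum>p\<in>{..<d}\<times>{..<d}. \<Sum>q\<in>{..<d}\<times>{..<d}. cnj (x p) * ptrans (rho_pi d \<pi> a) p q * x q)
     = (\<Sum>r<d. \<Sum>k<d. \<Sum>q\<in>{..<d}\<times>{..<d}. cnj (x (r,k)) * ptrans (rho_pi d \<pi> a) (r,k) q * x q)"
    by (rule prodsum)
  also have "\<dots> = (\<Sum>r<d. \<Sum>k<d. G r ((k + \<pi> r) mod d))"
    using inner by (intro sum.cong refl) auto
  also have "\<dots> = (\<Sum>r<d. \<Sum>g<d. G r g)" using reidx by simp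
  also have "\<dots> = (\<Sum>g<d. \<Sum>r<d. G r g)" by (rule sum.swap)
  finally show ?thesis unfolding G_def .
qed

lemma psd_herm: "psd_on I A \<Longrightarrow> p \<in> I \<Longrightarrow> q \<in> I \<Longrightarrow> A q p = cnj (A p q)"
  unfolding psd_on_def by blast

lemma psd_quad: "psd_on I A \<Longrightarrow>
   (\<Sum>p\<in>I. \<Sum>q\<in>I. cnj (x p) * A p q * x q) \<in> \<real> \<and> 0 \<le> Re (\<Sum>p\<in>I. \<Sum>q\<in>I. cnj (x p) * A p q * x q)"
  unfolding psd_on_def by (elim conjE allE) (rule conjI)

lemma psd_intro: "(\<And>p q. p \<in> I \<Longrightarrow> q \<in> I \<Longrightarrow> A q p = cnj (A p q)) \<Longrightarrow>
   (\<And>x. (\<Sum>p\<in>I. \<Sum>q\<in>I. cnj (x p) * A p q * x q) \<in> \<real> \<and> 0 \<le> Re (\<Sum>p\<in>I. \<Sum>q\<in>I. cnj (x p) * A p q * x q))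
   \<Longrightarrow> psd_on I A"
  unfolding psd_on_def by blast

theorem theorem3:
  fixes d :: nat and \<pi> :: "nat \<Rightarrow> nat" and a :: "nat \<Rightarrow> nat \<Rightarrow> nat \<Rightarrow> complex"
  assumes "d \<ge> 2"
    and "\<pi> permutes {..<d}" and "\<pi> 0 = 0"
    and "\<And>\<alpha>. \<alpha> < d \<Longrightarrow> psd_on {..<d} (a \<alpha>)"
    and "(\<Sum>\<alpha><d. \<Sum>i<d. a \<alpha> i i) = 1"
  shows "psd_on ({..<d} \<times> {..<d}) (ptrans (rho_pi d \<pi> a)) \<longleftrightarrow>
         (\<forall>\<gamma><d. psd_on {..<d} (atilde d \<pi> a \<gamma>))"
proof -
  have d: "0 < d" using assms(1) by simp
  let ?T = "ptrans (rho_pi d \<pi> a)"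
  let ?A = "atilde d \<pi> a"
  show ?thesis
  proof
    assume H: "psd_on ({..<d} \<times> {..<d}) ?T"
    show "\<forall>\<gamma><d. psd_on {..<d} (?A \<gamma>)"
    proof (intro allI impI)
      fix \<gamma> assume \<gamma>: "\<gamma> < d"
      have herm: "?A \<gamma> q p = cnj (?A \<gamma> p q)" if "p \<in> {..<d}" "q \<in> {..<d}" for p q
      proof -
        have pq: "p < d" "q < d" using that by auto
        have "(p, kk d \<pi> \<gamma> p) \<in> {..<d} \<times> {..<d}" "(q, kk d \<pi> \<gamma> q) \<in> {..<d} \<times> {..<d}"
          using pq kk_lt[OF d] by auto
        hence "?T (q, kk d \<pi> \<gamma> q) (p, kk d \<pi> \<gamma> p) = cnj (?T (p, kk d \<pi> \<gamma> p) (q, kk d \<pi> \<gamma> q))"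
          using psd_herm[OF H] by blast
        thus ?thesis using T_diag[OF d pq(1) pq(2) \<gamma>] T_diag[OF d pq(2) pq(1) \<gamma>] by simp
      qed
      have quad: "(\<Sum>p<d. \<Sum>q<d. cnj (x p) * ?A \<gamma> p q * x q) \<in> \<real> \<and>
          0 \<le> Re (\<Sum>p<d. \<Sum>q<d. cnj (x p) * ?A \<gamma> p q * x q)" for x
      proof -
        define y where "y = (\<lambda>(r,k). if k = kk d \<pi> \<gamma> r then x r else 0)"
        have yv: "y (r, kk d \<pi> g r) = (if g = \<gamma> then x r else 0)" if "g < d" for r g
        proof -
          have "kk d \<pi> g r = kk d \<pi> \<gamma> r \<longleftrightarrow> g = \<gamma>"
          proof
            assume e: "kk d \<pi> g r = kk d \<pi> \<gamma> r"
            have "g = (kk d \<pi> g r + \<pi> r) mod d" using kk_mod[where \<pi>=\<pi> and r=r, OF d that] by simp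
            also have "\<dots> = (kk d \<pi> \<gamma> r + \<pi> r) mod d" by (simp only: e)
            also have "\<dots> = \<gamma>" by (rule kk_mod[OF d \<gamma>])
            finally show "g = \<gamma>" .
          qed simp
          thus ?thesis unfolding y_def by auto
        qed
        have "(\<Sum>p\<in>{..<d}\<times>{..<d}. \<Sum>q\<in>{..<d}\<times>{..<d}. cnj (y p) * ?T p q * y q)
          = (\<Sum>g<d. \<Sum>r<d. \<Sum>s<d. cnj (y (r, kk d \<pi> g r)) * ?A g r s * y (s, kk d \<pi> g s))"
          by (rule Qform[OF d])
        also have "\<dots> = (\<Sum>g<d. if g = \<gamma> then (\<Sum>r<d. \<Sum>s<d. cnj (x r) * ?A \<gamma> r s * x s) else 0)"
          by (rule sum.cong[OF refl]) (simp add: yv)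
        also have "\<dots> = (\<Sum>r<d. \<Sum>s<d. cnj (x r) * ?A \<gamma> r s * x s)"
          using \<gamma> by (simp add: sum.delta)
        moreover have "(\<Sum>p\<in>{..<d}\<times>{..<d}. \<Sum>q\<in>{..<d}\<times>{..<d}. cnj (y p) * ?T p q * y q) \<in> \<real> \<and>
          0 \<le> Re (\<Sum>p\<in>{..<d}\<times>{..<d}. \<Sum>q\<in>{..<d}\<times>{..<d}. cnj (y p) * ?T p q * y q)"
          by (rule psd_quad[OF H])
        ultimately show ?thesis by simp
      qed
      show "psd_on {..<d} (?A \<gamma>)" by (rule psd_intro[OF herm quad])
    qed
  next
    assume H: "\<forall>\<gamma><d. psd_on {..<d} (?A \<gamma>)"
    have herm: "?T q p = cnj (?T p q)" if pI: "p \<in> {..<d}\<times>{..<d}" and qI: "q \<in> {..<d}\<times>{..<d}" for p q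
    proof -
      obtain r k where p: "p = (r,k)" "r < d" "k < d" using pI by auto
      obtain s l where q: "q = (s,l)" "s < d" "l < d" using qI by auto
      have g: "(k + \<pi> r) mod d < d" using d by simp
      have P: "psd_on {..<d} (?A ((k + \<pi> r) mod d))" using H[rule_format, OF g] .
      have hA: "?A ((k + \<pi> r) mod d) s r = cnj (?A ((k + \<pi> r) mod d) r s)"
        by (rule psd_herm[OF P]) (use p q in simp)+
      note TA = T_eq[where \<pi>=\<pi> and a=a, OF d p(2) q(2) p(3) q(3)]
      note TB = T_eq[where \<pi>=\<pi> and a=a, OF d q(2) p(2) q(3) p(3)]
      show ?thesis unfolding p(1) q(1)
      proof (cases "(k + \<pi> r) mod d = (l + \<pi> s) mod d")
        case True
        have c2: "(l + \<pi> s) mod d = (k + \<pi> r) mod d" using True by (rule sym)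
        have 1: "?T (s,l) (r,k) = ?A ((k + \<pi> r) mod d) s r" using TB c2 by simp
        have 2: "?T (r,k) (s,l) = ?A ((k + \<pi> r) mod d) r s" using TA True by simp
        show "?T (s,l) (r,k) = cnj (?T (r,k) (s,l))" unfolding 1 2 by (rule hA)
      next
        case False
        have c2: "(l + \<pi> s) mod d \<noteq> (k + \<pi> r) mod d" using False by simp
        have 1: "?T (s,l) (r,k) = 0" using TB c2 by simp
        have 2: "?T (r,k) (s,l) = 0" using TA False by simp
        show "?T (s,l) (r,k) = cnj (?T (r,k) (s,l))" unfolding 1 2 by simp
      qed
    qed
    have quad: "(\<Sum>p\<in>{..<d}\<times>{..<d}. \<Sum>q\<in>{..<d}\<times>{..<d}. cnj (x p) * ?T p q * x q) \<in> \<real> \<and>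
          0 \<le> Re (\<Sum>p\<in>{..<d}\<times>{..<d}. \<Sum>q\<in>{..<d}\<times>{..<d}. cnj (x p) * ?T p q * x q)" for x
    proof -
      have each: "(\<Sum>r<d. \<Sum>s<d. cnj (x (r, kk d \<pi> g r)) * ?A g r s * x (s, kk d \<pi> g s)) \<in> \<real> \<and>
          0 \<le> Re (\<Sum>r<d. \<Sum>s<d. cnj (x (r, kk d \<pi> g r)) * ?A g r s * x (s, kk d \<pi> g s))"
        if "g < d" for g
        by (rule psd_quad[OF H[rule_format, OF that]])
      have r1: "(\<Sum>g<d. \<Sum>r<d. \<Sum>s<d. cnj (x (r, kk d \<pi> g r)) * ?A g r s * x (s, kk d \<pi> g s)) \<in> \<real>"
        by (rule sum_in_Reals) (use each in simp)
      have "0 \<le> (\<Sum>g<d. Re (\<Sum>r<d. \<Sum>s<d. cnj (x (r, kk d \<pi> g r)) * ?A g r s * x (s, kk d \<pi> g s)))"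
        by (rule sum_nonneg) (use each in simp)
      hence r2: "0 \<le> Re (\<Sum>g<d. \<Sum>r<d. \<Sum>s<d. cnj (x (r, kk d \<pi> g r)) * ?A g r s * x (s, kk d \<pi> g s))"
        by (simp only: Re_sum)
      show ?thesis unfolding Qform[OF d] using r1 r2 by blast
    qed
    show "psd_on ({..<d} \<times> {..<d}) ?T" by (rule psd_intro[OF herm quad])
  qed
qed

end
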